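(* Let $\mathbf X=\{X_n\}$ and $\mathbf Y=\{Y_n\}$ be general sources. If $\mathbf X$ is an approximating source for $\mathbf Y$, then $$\inf_{m>0}\ \liminf_{n\to\infty}\ \inf_{c\in\mathbb R}\Big\{\Pr\Big\{\log\tfrac{1}{P_{Y_n}(Y_n)}<c+m\Big\}-\Pr\Big\{\log\tfrac{1}{P_{X_n}(X_n)}<c\Big\}\Big\}\ \ge 0 .$$
   Context: Logarithms are natural. A general source $\mathbf X=\{X_n\}_{n\ge1}$ is a sequence of random variables, $X_n$ taking values in a countable set $\mathcal X_n$, with no consistency requirements between different $n$. Similarly $Y_n$ takes values in a countable set $\mathcal Y_n$. The variational distance is $d(P,Q)=\sum_a|P(a)-Q(a)|$. $\mathbf X$ is an approximating source for $\mathbf Y$ if there exist deterministic maps $\phi_n:\mathcal X_n\to\mathcal Y_n$ with $\lim_{n\to\infty}d(P_{Y_n},P_{\phi_n(X_n)})=0$. *)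

theory Defs
  imports "HOL-Probability.Probability"
begin

definition var_dist :: "'b pmf \<Rightarrow> 'b pmf \<Rightarrow> real" where
  "var_dist P Q = (\<Sum>\<^sub>\<infinity> b. \<bar>pmf P b - pmf Q b\<bar>)"

text \<open>A general source is a sequence of distributions PX n (the law of X_n).
  X is an approximating source for Y if there are deterministic maps phi n with
  d(P_{Y_n}, P_{phi_n(X_n)}) tending to 0.\<close>
definition approximating_source :: "(nat \<Rightarrow> 'a pmf) \<Rightarrow> (nat \<Rightarrow> 'b pmf) \<Rightarrow> bool" where
  "approximating_source PX PY \<longleftrightarrow>
     (\<exists>\<phi> :: nat \<Rightarrow> 'a \<Rightarrow> 'b. (\<lambda>n. var_dist (PY n) (map_pmf (\<phi> n) (PX n))) \<longlonglongrightarrow> 0)"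

end

theory Submission
  imports Defs
begin

lemma pmf_summable: "pmf p summable_on A"
  using pmf_abs_summable[of p A] abs_summable_equivalent abs_summable_summable by blast

lemma measure_pmf_infsum: "measure (measure_pmf p) A = infsum (pmf p) A"
  using measure_pmf_conv_infsetsum infsetsum_infsum pmf_abs_summable by metis

lemma absdiff_summable: "(\<lambda>b. \<bar>pmf q b - pmf p b\<bar>) summable_on A"
proof (rule summable_on_comparison_test[where f="\<lambda>b. pmf q b + pmf p b"])
  show "(\<lambda>b. pmf q b + pmf p b) summable_on A"
    by (intro summable_on_add pmf_summable)
next
  fix x show "\<bar>pmf q x - pmf p x\<bar> \<le> pmf q x + pmf p x" using pmf_nonneg[of q x] pmf_nonneg[of p x] by linarith
qed auto

lemma key:
  fixes p q :: "'b pmf" and m c :: real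
  assumes m: "m > 0"
  shows "measure_pmf.prob p {z. ln (1 / pmf p z) < c} - measure_pmf.prob q {y. ln (1 / pmf q y) < c + m}
     \<le> var_dist q p + var_dist q p / (1 - exp (-m))"
proof -
  define S where "S = {z. ln (1 / pmf p z) < c}"
  define B where "B = {y. ln (1 / pmf q y) < c + m}"
  define g where "g = (\<lambda>b. \<bar>pmf q b - pmf p b\<bar>)"
  define K where "K = 1 - exp (-m)"
  have K: "K > 0" "K \<le> 1" using m by (auto simp: K_def)
  have gs: "\<And>A. g summable_on A" unfolding g_def by (rule absdiff_summable)
  have d: "var_dist q p = infsum g UNIV" unfolding var_dist_def g_def by simp
  have gle: "\<And>A. infsum g A \<le> infsum g UNIV"
    by (rule infsum_mono2[OF gs gs]) (auto simp: g_def)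
  have split: "infsum (pmf p) S = infsum (pmf p) (S \<inter> B) + infsum (pmf p) (S - B)"
  proof -
    have "S = (S \<inter> B) \<union> (S - B)" by blast
    then have "infsum (pmf p) S = infsum (pmf p) ((S \<inter> B) \<union> (S - B))" by simp
    also have "\<dots> = infsum (pmf p) (S \<inter> B) + infsum (pmf p) (S - B)"
      by (rule infsum_Un_disjoint) (auto intro: pmf_summable)
    finally show ?thesis .
  qed
  have a1: "infsum (pmf p) (S \<inter> B) \<le> infsum (\<lambda>b. pmf q b + g b) (S \<inter> B)"
    by (rule infsum_mono[OF pmf_summable summable_on_add[OF pmf_summable gs]]) (auto simp: g_def)
  also have "\<dots> = infsum (pmf q) (S \<inter> B) + infsum g (S \<inter> B)"
    by (rule infsum_add) (auto intro: pmf_summable gs)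
  also have "\<dots> \<le> infsum (pmf q) B + infsum g UNIV"
    by (intro add_mono gle infsum_mono2) (auto intro: pmf_summable)
  finally have a: "infsum (pmf p) (S \<inter> B) \<le> infsum (pmf q) B + infsum g UNIV" .
  have pw: "pmf p z \<le> g z / K" if z: "z \<in> S - B" for z
  proof (cases "pmf p z = 0")
    case True then show ?thesis using K by (simp add: g_def)
  next
    case False
    then have pz: "pmf p z > 0" using pmf_nonneg[of p z] by linarith
    from z have "ln (1 / pmf p z) < c" by (simp add: S_def)
    then have "- ln (pmf p z) < c" using pz by (simp add: ln_div)
    then have "ln (pmf p z) > -c" by simp
    then have e1: "pmf p z > exp (-c)" using pz by (metis exp_less_cancel_iff exp_ln)
    have "pmf q z \<le> exp (-m) * pmf p z"
    proof (cases "pmf q z = 0")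
      case True then show ?thesis using pz by simp
    next
      case False
      then have qz: "pmf q z > 0" using pmf_nonneg[of q z] by linarith
      from z have "\<not> ln (1 / pmf q z) < c + m" by (simp add: B_def)
      then have "ln (pmf q z) \<le> -c - m" using qz by (simp add: ln_div)
      then have "pmf q z \<le> exp (-c - m)" using qz by (metis exp_le_cancel_iff exp_ln)
      also have "\<dots> = exp (-m) * exp (-c)" by (simp add: exp_add[symmetric])
      also have "\<dots> \<le> exp (-m) * pmf p z" using e1 by simp
      finally show ?thesis .
    qed
    then have "K * pmf p z \<le> g z" unfolding K_def g_def by (simp add: algebra_simps)
    then show ?thesis using K by (simp add: field_simps)
  qed
  have "infsum (pmf p) (S - B) \<le> infsum (\<lambda>b. g b / K) (S - B)"
    by (rule infsum_mono) (use pw in \<open>auto intro: pmf_summable summable_on_cmult_left gs simp: divide_inverse\<close>)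
  also have "\<dots> = infsum g (S - B) / K"
    by (simp add: divide_inverse infsum_cmult_left')
  also have "\<dots> \<le> infsum g UNIV / K" using K gle by (simp add: divide_right_mono)
  finally have b: "infsum (pmf p) (S - B) \<le> infsum g UNIV / K" .
  show ?thesis
    unfolding measure_pmf_infsum S_def[symmetric] B_def[symmetric] d K_def[symmetric]
    using split a b by linarith
qed

lemma map_mono:
  fixes p :: "'a pmf" and f :: "'a \<Rightarrow> 'b"
  shows "measure_pmf.prob p {x. ln (1 / pmf p x) < c}
       \<le> measure_pmf.prob (map_pmf f p) {z. ln (1 / pmf (map_pmf f p) z) < c}"
proof -
  have "measure_pmf.prob p {x. ln (1 / pmf p x) < c} = measure_pmf.prob p ({x. ln (1 / pmf p x) < c} \<inter> set_pmf p)"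
    by (simp add: measure_Int_set_pmf)
  also have "\<dots> \<le> measure_pmf.prob p (f -` {z. ln (1 / pmf (map_pmf f p) z) < c})"
  proof (rule measure_pmf.finite_measure_mono)
    show "{x. ln (1 / pmf p x) < c} \<inter> set_pmf p \<subseteq> f -` {z. ln (1 / pmf (map_pmf f p) z) < c}"
    proof
      fix x assume x: "x \<in> {x. ln (1 / pmf p x) < c} \<inter> set_pmf p"
      then have px: "pmf p x > 0" by (simp add: pmf_positive)
      have "pmf p x \<le> pmf (map_pmf f p) (f x)"
      proof -
        have "pmf (map_pmf f p) (f x) = measure_pmf.prob p (f -` {f x})" by (simp add: pmf_map)
        moreover have "measure_pmf.prob p {x} \<le> measure_pmf.prob p (f -` {f x})"
          by (rule measure_pmf.finite_measure_mono) auto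
        ultimately show ?thesis by (simp add: measure_pmf_single)
      qed
      then have "ln (1 / pmf (map_pmf f p) (f x)) \<le> ln (1 / pmf p x)"
        using px by (simp add: ln_div)
      then show "x \<in> f -` {z. ln (1 / pmf (map_pmf f p) z) < c}" using x by simp
    qed
  qed simp
  also have "\<dots> = measure_pmf.prob (map_pmf f p) {z. ln (1 / pmf (map_pmf f p) z) < c}"
    by simp
  finally show ?thesis .
qed

theorem lemma6:
  fixes PX :: "nat \<Rightarrow> ('a::countable) pmf" and PY :: "nat \<Rightarrow> ('b::countable) pmf"
  assumes "approximating_source PX PY"
  shows "(INF m\<in>{0::real<..}. liminf (\<lambda>n. INF c::real.
            ereal (measure_pmf.prob (PY n) {y. ln (1 / pmf (PY n) y) < c + m}
                 - measure_pmf.prob (PX n) {x. ln (1 / pmf (PX n) x) < c}))) \<ge> 0"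
proof -
  obtain \<phi> :: "nat \<Rightarrow> 'a \<Rightarrow> 'b" where lim: "(\<lambda>n. var_dist (PY n) (map_pmf (\<phi> n) (PX n))) \<longlonglongrightarrow> 0"
    using assms unfolding approximating_source_def by blast
  define d where "d = (\<lambda>n. var_dist (PY n) (map_pmf (\<phi> n) (PX n)))"
  show ?thesis
  proof (rule INF_greatest)
    fix m :: real assume "m \<in> {0<..}"
    then have m: "m > 0" by simp
    define K where "K = 1 + 1 / (1 - exp (-m))"
    have bound: "ereal (- (K * d n)) \<le> (INF c::real.
            ereal (measure_pmf.prob (PY n) {y. ln (1 / pmf (PY n) y) < c + m}
                 - measure_pmf.prob (PX n) {x. ln (1 / pmf (PX n) x) < c}))" for n
    proof (rule INF_greatest)
      fix c :: real
      have "measure_pmf.prob (PX n) {x. ln (1 / pmf (PX n) x) < c}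
        - measure_pmf.prob (PY n) {y. ln (1 / pmf (PY n) y) < c + m} \<le> d n + d n / (1 - exp (-m))"
        using map_mono[of "PX n" c "\<phi> n"] key[OF m, of "map_pmf (\<phi> n) (PX n)" c "PY n"]
        unfolding d_def by linarith
      then show "ereal (- (K * d n)) \<le> ereal (measure_pmf.prob (PY n) {y. ln (1 / pmf (PY n) y) < c + m}
                 - measure_pmf.prob (PX n) {x. ln (1 / pmf (PX n) x) < c})"
        by (simp add: K_def algebra_simps)
    qed
    have "(\<lambda>n. ereal (- (K * d n))) \<longlonglongrightarrow> ereal (- (K * 0))"
      using lim unfolding d_def[symmetric]
      by (intro tendsto_intros lim_ereal[THEN iffD2]) auto
    then have "liminf (\<lambda>n. ereal (- (K * d n))) = 0"
      by (simp add: lim_imp_Liminf zero_ereal_def)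
    moreover have "liminf (\<lambda>n. ereal (- (K * d n))) \<le> liminf (\<lambda>n. INF c::real.
            ereal (measure_pmf.prob (PY n) {y. ln (1 / pmf (PY n) y) < c + m}
                 - measure_pmf.prob (PX n) {x. ln (1 / pmf (PX n) x) < c}))"
      by (rule Liminf_mono) (use bound in auto)
    ultimately show "0 \<le> liminf (\<lambda>n. INF c::real.
            ereal (measure_pmf.prob (PY n) {y. ln (1 / pmf (PY n) y) < c + m}
                 - measure_pmf.prob (PX n) {x. ln (1 / pmf (PX n) x) < c}))" by simp
  qed
qed

end
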